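(* Let $T$ be one of $\mathrm{DLO}$, $\mathrm{DOAG}$, $\mathrm{RCF}$, let $\boldsymbol{M}$ be a model of $T$, and let $x,y$ be finite tuples of variables. Every Boolean combination (inside $\boldsymbol{M}^{(x,y)}$) of finitely many special stable subsets of $\boldsymbol{M}^{(x;y)}$ is a finite union of special stable subsets of $\boldsymbol{M}^{(x;y)}$.
   Context: $\mathrm{DLO}=\mathrm{Th}(\mathbb{R},<)$ (dense linear orders without endpoints) in the language $\{<\}$, $\mathrm{DOAG}=\mathrm{Th}(\mathbb{R},+,<)$ (divisible ordered abelian groups) in the language $\{+,<\}$ (with the usual constants/inverse as appropriate), $\mathrm{RCF}=\mathrm{Th}(\mathbb{R},+,\cdot,<)$ (real closed fields) in the ordered ring language; "definable" means definable with parameters from $\boldsymbol{M}$. $\boldsymbol{M}^{x}$ is the cartesian power of $\boldsymbol{M}$ indexed by the variables of $x$, and $\boldsymbol{M}^{(x;y)}$ denotes $\boldsymbol{M}^{(x,y)}$ with the fixed division of variables $(x;y)$. A set is equationally definable if it is defined by a Boolean combination of atomic formulas with parameters from $\boldsymbol{M}$ that do not involve the symbol $<$. A definable set $D\subseteq\boldsymbol{M}^{(x;y)}$ is special stable (with respect to $(x;y)$) if there are definable sets $X\subseteq \boldsymbol{M}^x$, $Y\subseteq\boldsymbol{M}^y$ and an equationally definable set $Z\subseteq\boldsymbol{M}^{(x;y)}$ with $D=Z\cap(X\times Y)$. *)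

theory Defs
  imports Main "HOL.Real"
begin

text \<open>First-order syntax for the ordered-ring language and its sublanguages.
  Constants C c are parameters from the model; variables are indexed by nat.\<close>

datatype 'a trm = V nat | C 'a | Zr | On | Ng "'a trm" | Pl "'a trm" "'a trm" | Ml "'a trm" "'a trm"

datatype 'a fm = FF | Eq "'a trm" "'a trm" | Lt "'a trm" "'a trm"
  | Neg "'a fm" | Conj "'a fm" "'a fm" | Ex nat "'a fm"

datatype thy = DLO | DOAG | RCF

fun trm_ok :: "thy \<Rightarrow> 'a trm \<Rightarrow> bool" where
  "trm_ok T (V i) = True"
| "trm_ok T (C c) = True"
| "trm_ok T Zr = (T \<noteq> DLO)"
| "trm_ok T On = (T = RCF)"
| "trm_ok T (Ng s) = (T \<noteq> DLO \<and> trm_ok T s)"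
| "trm_ok T (Pl s t) = (T \<noteq> DLO \<and> trm_ok T s \<and> trm_ok T t)"
| "trm_ok T (Ml s t) = (T = RCF \<and> trm_ok T s \<and> trm_ok T t)"

fun fm_ok :: "thy \<Rightarrow> 'a fm \<Rightarrow> bool" where
  "fm_ok T FF = True"
| "fm_ok T (Eq s t) = (trm_ok T s \<and> trm_ok T t)"
| "fm_ok T (Lt s t) = (trm_ok T s \<and> trm_ok T t)"
| "fm_ok T (Neg p) = fm_ok T p"
| "fm_ok T (Conj p q) = (fm_ok T p \<and> fm_ok T q)"
| "fm_ok T (Ex n p) = fm_ok T p"

fun qf_eq :: "thy \<Rightarrow> 'a fm \<Rightarrow> bool" where
  "qf_eq T FF = True"
| "qf_eq T (Eq s t) = (trm_ok T s \<and> trm_ok T t)"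
| "qf_eq T (Lt s t) = False"
| "qf_eq T (Neg p) = qf_eq T p"
| "qf_eq T (Conj p q) = (qf_eq T p \<and> qf_eq T q)"
| "qf_eq T (Ex n p) = False"

fun tvars :: "'a trm \<Rightarrow> nat set" where
  "tvars (V i) = {i}"
| "tvars (C c) = {}"
| "tvars Zr = {}"
| "tvars On = {}"
| "tvars (Ng s) = tvars s"
| "tvars (Pl s t) = tvars s \<union> tvars t"
| "tvars (Ml s t) = tvars s \<union> tvars t"

fun fv :: "'a fm \<Rightarrow> nat set" where
  "fv FF = {}"
| "fv (Eq s t) = tvars s \<union> tvars t"
| "fv (Lt s t) = tvars s \<union> tvars t"
| "fv (Neg p) = fv p"
| "fv (Conj p q) = fv p \<union> fv q"
| "fv (Ex n p) = fv p - {n}"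

text \<open>A structure for the ordered ring language (symbols outside the language
  of the theory under consideration are simply ignored).\<close>
record 'a str =
  s_zero :: 'a
  s_one :: 'a
  s_neg :: "'a \<Rightarrow> 'a"
  s_add :: "'a \<Rightarrow> 'a \<Rightarrow> 'a"
  s_mul :: "'a \<Rightarrow> 'a \<Rightarrow> 'a"
  s_less :: "'a \<Rightarrow> 'a \<Rightarrow> bool"

fun ev :: "('a, 'b) str_scheme \<Rightarrow> 'a trm \<Rightarrow> (nat \<Rightarrow> 'a) \<Rightarrow> 'a" where
  "ev S (V i) e = e i"
| "ev S (C c) e = c"
| "ev S Zr e = s_zero S"
| "ev S On e = s_one S"
| "ev S (Ng s) e = s_neg S (ev S s e)"
| "ev S (Pl s t) e = s_add S (ev S s e) (ev S t e)"
| "ev S (Ml s t) e = s_mul S (ev S s e) (ev S t e)"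

fun sat :: "('a, 'b) str_scheme \<Rightarrow> 'a fm \<Rightarrow> (nat \<Rightarrow> 'a) \<Rightarrow> bool" where
  "sat S FF e = False"
| "sat S (Eq s t) e = (ev S s e = ev S t e)"
| "sat S (Lt s t) e = s_less S (ev S s e) (ev S t e)"
| "sat S (Neg p) e = (\<not> sat S p e)"
| "sat S (Conj p q) e = (sat S p e \<and> sat S q e)"
| "sat S (Ex n p) e = (\<exists>a. sat S p (e(n := a)))"

definition realS :: "real str" where
  "realS = \<lparr>s_zero = 0, s_one = 1, s_neg = uminus, s_add = (+), s_mul = (*), s_less = (<)\<rparr>"

text \<open>S is a model of T = Th(R, ...) in the language of T: S satisfies exactly the
  sentences (no free variables, no parameters) of that language true in the reals.\<close>
definition is_model :: "thy \<Rightarrow> 'a str \<Rightarrow> bool" where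
  "is_model T S \<longleftrightarrow> (\<forall>\<phi> :: 'a fm. fm_ok T \<phi> \<and> fv \<phi> = {} \<and> set_fm \<phi> = {} \<longrightarrow>
      (sat S \<phi> (\<lambda>_. undefined) \<longleftrightarrow> sat realS (map_fm (\<lambda>_. 0) \<phi>) (\<lambda>_. 0)))"

definition lenv :: "'a list \<Rightarrow> nat \<Rightarrow> 'a" where
  "lenv xs i = (if i < length xs then xs ! i else undefined)"

text \<open>M^x with x = (v_0,...,v_{n-1}) is represented by lists of length n.\<close>
definition definable :: "thy \<Rightarrow> 'a str \<Rightarrow> nat \<Rightarrow> 'a list set \<Rightarrow> bool" where
  "definable T S n A \<longleftrightarrow> (\<exists>\<phi>. fm_ok T \<phi> \<and> fv \<phi> \<subseteq> {..<n} \<and>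
      A = {a. length a = n \<and> sat S \<phi> (lenv a)})"

text \<open>Subsets of M^(x;y), x of length n (variables 0..n-1), y of length m
  (variables n..n+m-1), represented as sets of pairs of lists.\<close>
definition tuples :: "nat \<Rightarrow> nat \<Rightarrow> ('a list \<times> 'a list) set" where
  "tuples n m = {(a, b). length a = n \<and> length b = m}"

definition eq_definable :: "thy \<Rightarrow> 'a str \<Rightarrow> nat \<Rightarrow> nat \<Rightarrow> ('a list \<times> 'a list) set \<Rightarrow> bool" where
  "eq_definable T S n m Z \<longleftrightarrow> (\<exists>\<phi>. qf_eq T \<phi> \<and> fv \<phi> \<subseteq> {..<n+m} \<and>
      Z = {(a, b). length a = n \<and> length b = m \<and> sat S \<phi> (lenv (a @ b))})"

definition special_stable :: "thy \<Rightarrow> 'a str \<Rightarrow> nat \<Rightarrow> nat \<Rightarrow> ('a list \<times> 'a list) set \<Rightarrow> bool" where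
  "special_stable T S n m D \<longleftrightarrow> (\<exists>X Y Z. definable T S n X \<and> definable T S m Y \<and>
      eq_definable T S n m Z \<and> D = Z \<inter> (X \<times> Y))"

inductive_set bool_comb :: "'b set \<Rightarrow> 'b set set \<Rightarrow> 'b set set" for U F where
  bc_base: "A \<in> F \<Longrightarrow> A \<in> bool_comb U F"
| bc_univ: "U \<in> bool_comb U F"
| bc_compl: "A \<in> bool_comb U F \<Longrightarrow> U - A \<in> bool_comb U F"
| bc_int: "A \<in> bool_comb U F \<Longrightarrow> B \<in> bool_comb U F \<Longrightarrow> A \<inter> B \<in> bool_comb U F"
| bc_un: "A \<in> bool_comb U F \<Longrightarrow> B \<in> bool_comb U F \<Longrightarrow> A \<union> B \<in> bool_comb U F"

end

theory Submission
  imports Defs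
begin

definition fu :: "thy \<Rightarrow> 'a str \<Rightarrow> nat \<Rightarrow> nat \<Rightarrow> ('a list \<times> 'a list) set \<Rightarrow> bool" where
  "fu T S n m B \<longleftrightarrow> (\<exists>G. finite G \<and> (\<forall>D\<in>G. special_stable T S n m D) \<and> B = \<Union>G)"

lemma def_full: "definable T S n {a. length a = n}"
  unfolding definable_def by (rule exI[of _ "Neg FF"]) auto

lemma def_compl: "definable T S n X \<Longrightarrow> definable T S n ({a. length a = n} - X)"
  unfolding definable_def
  apply (elim exE conjE)
  subgoal for \<phi> by (rule exI[of _ "Neg \<phi>"]) auto
  done

lemma def_int: "definable T S n X \<Longrightarrow> definable T S n X' \<Longrightarrow> definable T S n (X \<inter> X')"
  unfolding definable_def
  apply (elim exE conjE)
  subgoal for \<phi> \<psi> by (rule exI[of _ "Conj \<phi> \<psi>"]) auto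
  done

lemma eqd_full: "eq_definable T S n m (tuples n m)"
  unfolding eq_definable_def tuples_def by (rule exI[of _ "Neg FF"]) auto

lemma eqd_compl: "eq_definable T S n m Z \<Longrightarrow> eq_definable T S n m (tuples n m - Z)"
  unfolding eq_definable_def tuples_def
  apply (elim exE conjE)
  subgoal for \<phi> by (rule exI[of _ "Neg \<phi>"]) auto
  done

lemma eqd_int: "eq_definable T S n m Z \<Longrightarrow> eq_definable T S n m Z' \<Longrightarrow> eq_definable T S n m (Z \<inter> Z')"
  unfolding eq_definable_def
  apply (elim exE conjE)
  subgoal for \<phi> \<psi> by (rule exI[of _ "Conj \<phi> \<psi>"]) auto
  done

lemma eqd_sub: "eq_definable T S n m Z \<Longrightarrow> Z \<subseteq> tuples n m"
  unfolding eq_definable_def tuples_def by auto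

lemma def_sub: "definable T S n X \<Longrightarrow> X \<subseteq> {a. length a = n}"
  unfolding definable_def by auto

lemma ss_int: "special_stable T S n m A \<Longrightarrow> special_stable T S n m B \<Longrightarrow> special_stable T S n m (A \<inter> B)"
  unfolding special_stable_def
  apply (elim exE conjE)
  apply (intro exI conjI)
     apply (erule (1) def_int)
    apply (erule (1) def_int)
   apply (erule (1) eqd_int)
  by auto

lemma ss_univ: "special_stable T S n m (tuples n m)"
  unfolding special_stable_def
  by (rule exI[of _ "{a. length a = n}"], rule exI[of _ "{a. length a = m}"], rule exI[of _ "tuples n m"])
     (auto simp: def_full eqd_full, auto simp: tuples_def)

lemma fu_un: "fu T S n m A \<Longrightarrow> fu T S n m B \<Longrightarrow> fu T S n m (A \<union> B)"
  unfolding fu_def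
  apply (elim exE conjE)
  subgoal for G H by (rule exI[of _ "G \<union> H"]) auto
  done

lemma fu_int: "fu T S n m A \<Longrightarrow> fu T S n m B \<Longrightarrow> fu T S n m (A \<inter> B)"
  unfolding fu_def
  apply (elim exE conjE)
  subgoal for G H
    apply (rule exI[of _ "(\<lambda>(D,E). D \<inter> E) ` (G \<times> H)"])
    by (auto intro: ss_int)
  done

lemma fu_single: "special_stable T S n m D \<Longrightarrow> fu T S n m D"
  unfolding fu_def by (rule exI[of _ "{D}"]) auto

lemma ss_compl: "special_stable T S n m D \<Longrightarrow> fu T S n m (tuples n m - D)"
proof -
  assume "special_stable T S n m D"
  then obtain X Y Z where X: "definable T S n X" and Y: "definable T S m Y"
    and Z: "eq_definable T S n m Z" and D: "D = Z \<inter> (X \<times> Y)"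
    unfolding special_stable_def by blast
  have 1: "special_stable T S n m (tuples n m - Z)"
    unfolding special_stable_def
    by (rule exI[of _ "{a. length a = n}"], rule exI[of _ "{a. length a = m}"], rule exI[of _ "tuples n m - Z"])
       (auto simp: def_full eqd_compl Z, auto simp: tuples_def)
  have 2: "special_stable T S n m (tuples n m \<inter> (({a. length a = n} - X) \<times> {a. length a = m}))"
    unfolding special_stable_def
    by (rule exI[of _ "{a. length a = n} - X"], rule exI[of _ "{a. length a = m}"], rule exI[of _ "tuples n m"])
       (auto simp: def_full eqd_full def_compl X)
  have 3: "special_stable T S n m (tuples n m \<inter> ({a. length a = n} \<times> ({a. length a = m} - Y)))"
    unfolding special_stable_def
    by (rule exI[of _ "{a. length a = n}"], rule exI[of _ "{a. length a = m} - Y"], rule exI[of _ "tuples n m"])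
       (auto simp: def_full eqd_full def_compl Y)
  have e: "tuples n m - D = (tuples n m - Z) \<union> (tuples n m \<inter> (({a. length a = n} - X) \<times> {a. length a = m}))
      \<union> (tuples n m \<inter> ({a. length a = n} \<times> ({a. length a = m} - Y)))"
    using def_sub[OF X] def_sub[OF Y] eqd_sub[OF Z] unfolding D tuples_def by auto
  show ?thesis unfolding e by (intro fu_un fu_single 1 2 3)
qed

lemma fu_compl_aux: "finite G \<Longrightarrow> (\<forall>D\<in>G. special_stable T S n m D) \<Longrightarrow> fu T S n m (tuples n m - \<Union>G)"
proof (induction G rule: finite_induct)
  case empty
  then show ?case by (simp add: fu_single ss_univ)
next
  case (insert D G)
  have "tuples n m - \<Union>(insert D G) = (tuples n m - D) \<inter> (tuples n m - \<Union>G)" by auto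
  then show ?case using insert by (simp add: fu_int ss_compl)
qed

lemma fu_compl: "fu T S n m B \<Longrightarrow> fu T S n m (tuples n m - B)"
  unfolding fu_def[of T S n m B] using fu_compl_aux by blast

theorem lemma2p2:
  fixes T :: thy and S :: "'a str" and n m :: nat
    and F :: "('a list \<times> 'a list) set set"
  assumes "is_model T S"
    and "finite F"
    and "\<forall>D\<in>F. special_stable T S n m D"
  shows "\<forall>B \<in> bool_comb (tuples n m) F. \<exists>G. finite G \<and>
           (\<forall>D\<in>G. special_stable T S n m D) \<and> B = \<Union>G"
proof
  fix B assume "B \<in> bool_comb (tuples n m) F"
  then have "fu T S n m B"
  proof induction
    case (bc_base A) then show ?case using assms(3) by (simp add: fu_single)
  next
    case bc_univ then show ?case by (simp add: fu_single ss_univ)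
  next
    case (bc_compl A) then show ?case by (simp add: fu_compl)
  next
    case (bc_int A B) then show ?case by (simp add: fu_int)
  next
    case (bc_un A B) then show ?case by (simp add: fu_un)
  qed
  then show "\<exists>G. finite G \<and> (\<forall>D\<in>G. special_stable T S n m D) \<and> B = \<Union>G"
    unfolding fu_def .
qed

end
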